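(* For any integers $r\ge 2$ and $t\ge 3$, $dim_s(P_r\times K_t)=t\left\lceil \frac{r}{2}\right\rceil$.
   Context: $P_r$ is the path on $r$ vertices and $K_t$ the complete graph on $t$ vertices. The direct product $G\times H$ has vertex set $V(G)\times V(H)$, with $(a,b)$ adjacent to $(c,d)$ iff $ac\in E(G)$ and $bd\in E(H)$. For a connected graph $G$, $I_G[u,v]$ is the set of vertices lying on some shortest $u$–$v$ path; a vertex $w$ strongly resolves $u,v$ if $v\in I_G[u,w]$ or $u\in I_G[v,w]$; a strong resolving set is a set $S\subseteq V(G)$ such that every pair of vertices is strongly resolved by some vertex of $S$; $dim_s(G)$ is the minimum cardinality of a strong resolving set. *)

theory Defs
  imports Complex_Main
begin

text \<open>A graph is given by a vertex set V and a (symmetric) adjacency predicate E.\<close>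

definition is_walk :: "'a set \<Rightarrow> ('a \<Rightarrow> 'a \<Rightarrow> bool) \<Rightarrow> 'a list \<Rightarrow> bool" where
  "is_walk V E xs \<longleftrightarrow> xs \<noteq> [] \<and> set xs \<subseteq> V \<and>
     (\<forall>i. Suc i < length xs \<longrightarrow> E (xs ! i) (xs ! Suc i))"

definition gdist :: "'a set \<Rightarrow> ('a \<Rightarrow> 'a \<Rightarrow> bool) \<Rightarrow> 'a \<Rightarrow> 'a \<Rightarrow> nat" where
  "gdist V E u v = (LEAST n. \<exists>xs. is_walk V E xs \<and> hd xs = u \<and> last xs = v \<and> length xs = Suc n)"

definition interval :: "'a set \<Rightarrow> ('a \<Rightarrow> 'a \<Rightarrow> bool) \<Rightarrow> 'a \<Rightarrow> 'a \<Rightarrow> 'a set" where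
  "interval V E u v = {w. \<exists>xs. is_walk V E xs \<and> hd xs = u \<and> last xs = v \<and>
      length xs = Suc (gdist V E u v) \<and> w \<in> set xs}"

definition strongly_resolves :: "'a set \<Rightarrow> ('a \<Rightarrow> 'a \<Rightarrow> bool) \<Rightarrow> 'a \<Rightarrow> 'a \<Rightarrow> 'a \<Rightarrow> bool" where
  "strongly_resolves V E w u v \<longleftrightarrow> v \<in> interval V E u w \<or> u \<in> interval V E v w"

definition strong_resolving_set :: "'a set \<Rightarrow> ('a \<Rightarrow> 'a \<Rightarrow> bool) \<Rightarrow> 'a set \<Rightarrow> bool" where
  "strong_resolving_set V E S \<longleftrightarrow> S \<subseteq> V \<and>
     (\<forall>u\<in>V. \<forall>v\<in>V. u \<noteq> v \<longrightarrow> (\<exists>w\<in>S. strongly_resolves V E w u v))"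

definition strong_metric_dim :: "'a set \<Rightarrow> ('a \<Rightarrow> 'a \<Rightarrow> bool) \<Rightarrow> nat" where
  "strong_metric_dim V E = (LEAST k. \<exists>S. strong_resolving_set V E S \<and> finite S \<and> card S = k)"

definition path_vertices :: "nat \<Rightarrow> nat set" where "path_vertices r = {0..<r}"
definition path_adj :: "nat \<Rightarrow> nat \<Rightarrow> nat \<Rightarrow> bool" where
  "path_adj r i j \<longleftrightarrow> i < r \<and> j < r \<and> (j = Suc i \<or> i = Suc j)"

definition complete_vertices :: "nat \<Rightarrow> nat set" where "complete_vertices t = {0..<t}"
definition complete_adj :: "nat \<Rightarrow> nat \<Rightarrow> nat \<Rightarrow> bool" where
  "complete_adj t a b \<longleftrightarrow> a < t \<and> b < t \<and> a \<noteq> b"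

definition direct_prod_vertices :: "'a set \<Rightarrow> 'b set \<Rightarrow> ('a \<times> 'b) set" where
  "direct_prod_vertices VG VH = VG \<times> VH"
definition direct_prod_adj :: "('a \<Rightarrow> 'a \<Rightarrow> bool) \<Rightarrow> ('b \<Rightarrow> 'b \<Rightarrow> bool) \<Rightarrow> 'a \<times> 'b \<Rightarrow> 'a \<times> 'b \<Rightarrow> bool" where
  "direct_prod_adj EG EH x y \<longleftrightarrow> EG (fst x) (fst y) \<and> EH (snd x) (snd y)"

end

theory Submission
  imports Defs
begin


lemma is_walk_Cons: "is_walk V E (x # ys) \<longleftrightarrow> x \<in> V \<and> (ys = [] \<or> (is_walk V E ys \<and> E x (hd ys)))"
proof
  assume h: "is_walk V E (x # ys)"
  show "x \<in> V \<and> (ys = [] \<or> (is_walk V E ys \<and> E x (hd ys)))"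
  proof (cases ys)
    case Nil then show ?thesis using h by (simp add: is_walk_def)
  next
    case (Cons y zs)
    have 1: "E x y" using h Cons unfolding is_walk_def by (metis length_Cons nth_Cons_0 nth_Cons_Suc zero_less_Suc Suc_less_eq)
    have 2: "\<forall>i. Suc i < length ys \<longrightarrow> E (ys ! i) (ys ! Suc i)"
    proof (intro allI impI)
      fix i assume "Suc i < length ys"
      then have "Suc (Suc i) < length (x # ys)" by simp
      then show "E (ys ! i) (ys ! Suc i)" using h unfolding is_walk_def by (metis nth_Cons_Suc)
    qed
    show ?thesis using h Cons 1 2 by (simp add: is_walk_def)
  qed
next
  assume h: "x \<in> V \<and> (ys = [] \<or> (is_walk V E ys \<and> E x (hd ys)))"
  show "is_walk V E (x # ys)"
  proof (cases ys)
    case Nil then show ?thesis using h by (simp add: is_walk_def)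
  next
    case (Cons y zs)
    have w: "is_walk V E ys" "E x y" using h Cons by auto
    show ?thesis unfolding is_walk_def
    proof (intro conjI allI impI)
      show "set (x # ys) \<subseteq> V" using h w(1) by (simp add: is_walk_def)
      fix i assume i: "Suc i < length (x # ys)"
      show "E ((x # ys) ! i) ((x # ys) ! Suc i)"
      proof (cases i)
        case 0 then show ?thesis using w Cons by simp
      next
        case (Suc k) then show ?thesis using w(1) i unfolding is_walk_def by simp
      qed
    qed simp
  qed
qed

lemma is_walk_append: "is_walk V E xs \<Longrightarrow> is_walk V E ys \<Longrightarrow> last xs = hd ys \<Longrightarrow> is_walk V E (xs @ tl ys)"
proof (induction xs)
  case Nil then show ?case by (simp add: is_walk_def)
next
  case (Cons x xs)
  show ?case
  proof (cases "xs = []")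
    case True
    then show ?thesis using Cons.prems by (cases ys) (auto simp: is_walk_Cons)
  next
    case False
    then obtain y zs where Cons2: "xs = y # zs" by (cases xs) auto
    have "is_walk V E xs" "E x (hd xs)" "x \<in> V" using Cons.prems Cons2 by (auto simp: is_walk_Cons)
    moreover have "last xs = hd ys" using Cons.prems Cons2 by simp
    ultimately have "is_walk V E (xs @ tl ys)" using Cons.IH Cons.prems by blast
    then show ?thesis using \<open>E x (hd xs)\<close> \<open>x \<in> V\<close> Cons2 by (simp add: is_walk_Cons)
  qed
qed

lemma is_walk_take: "is_walk V E xs \<Longrightarrow> p < length xs \<Longrightarrow> is_walk V E (take (Suc p) xs)"
  unfolding is_walk_def using set_take_subset by (fastforce simp: nth_take)

lemma is_walk_drop: "is_walk V E xs \<Longrightarrow> p < length xs \<Longrightarrow> is_walk V E (drop p xs)"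
  unfolding is_walk_def using set_drop_subset by (fastforce simp: nth_drop)

lemma is_walk_rev: "is_walk V E xs \<Longrightarrow> (\<And>x y. E x y \<Longrightarrow> E y x) \<Longrightarrow> is_walk V E (rev xs)"
  unfolding is_walk_def
proof (intro conjI allI impI)
  fix i assume h: "xs \<noteq> [] \<and> set xs \<subseteq> V \<and> (\<forall>i. Suc i < length xs \<longrightarrow> E (xs ! i) (xs ! Suc i))"
    and s: "\<And>x y. E x y \<Longrightarrow> E y x" and i: "Suc i < length (rev xs)"
  have "E (xs ! (length xs - Suc (Suc i))) (xs ! Suc (length xs - Suc (Suc i)))"
    using h i by auto
  moreover have "Suc (length xs - Suc (Suc i)) = length xs - Suc i" using i by simp
  ultimately show "E (rev xs ! i) (rev xs ! Suc i)" using i s by (simp add: rev_nth)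
qed auto

lemma gdist_le: "is_walk V E xs \<Longrightarrow> hd xs = u \<Longrightarrow> last xs = v \<Longrightarrow> length xs = Suc n \<Longrightarrow> gdist V E u v \<le> n"
  unfolding gdist_def by (rule Least_le) blast

lemma gdist_ex: "is_walk V E xs \<Longrightarrow> hd xs = u \<Longrightarrow> last xs = v \<Longrightarrow>
   \<exists>ys. is_walk V E ys \<and> hd ys = u \<and> last ys = v \<and> length ys = Suc (gdist V E u v)"
proof -
  assume a: "is_walk V E xs" "hd xs = u" "last xs = v"
  have "\<exists>n. \<exists>xs. is_walk V E xs \<and> hd xs = u \<and> last xs = v \<and> length xs = Suc n"
    using a by (intro exI[of _ "length xs - 1"]) (auto simp: is_walk_def)
  then show ?thesis unfolding gdist_def by (rule LeastI_ex)
qed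




definition PE :: "nat \<Rightarrow> nat \<Rightarrow> nat \<times> nat \<Rightarrow> nat \<times> nat \<Rightarrow> bool" where
  "PE r t x y \<longleftrightarrow> (fst y = Suc (fst x) \<or> fst x = Suc (fst y)) \<and> fst x < r \<and> fst y < r
     \<and> snd x \<noteq> snd y \<and> snd x < t \<and> snd y < t"

definition PV :: "nat \<Rightarrow> nat \<Rightarrow> (nat \<times> nat) set" where "PV r t = {0..<r} \<times> {0..<t}"

lemma PV_eq: "direct_prod_vertices (path_vertices r) (complete_vertices t) = PV r t"
  by (simp add: direct_prod_vertices_def path_vertices_def complete_vertices_def PV_def)

lemma PE_eq: "direct_prod_adj (path_adj r) (complete_adj t) = PE r t"
  by (auto simp: fun_eq_iff direct_prod_adj_def path_adj_def complete_adj_def PE_def)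

definition D :: "nat \<times> nat \<Rightarrow> nat \<times> nat \<Rightarrow> nat" where
  "D u v = (if fst u = fst v then (if snd u = snd v then 0 else 2)
     else if fst u = Suc (fst v) \<or> fst v = Suc (fst u) then (if snd u = snd v then 3 else 1)
     else (fst u - fst v) + (fst v - fst u))"

lemma D_sym: "D u v = D v u" by (auto simp: D_def)

lemma walk_fst: "is_walk V (PE r t) xs \<Longrightarrow> k < length xs \<Longrightarrow>
   (fst (xs!0) - fst (xs!k)) + (fst (xs!k) - fst (xs!0)) \<le> k \<and> even (k + fst (xs!0) + fst (xs!k))"
proof (induction k)
  case 0 then show ?case by simp
next
  case (Suc k)
  then have "PE r t (xs!k) (xs!Suc k)" unfolding is_walk_def by simp
  then have "fst (xs!Suc k) = Suc (fst (xs!k)) \<or> fst (xs!k) = Suc (fst (xs!Suc k))" by (simp add: PE_def)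
  with Suc show ?case by auto
qed

lemma walk_lower: assumes w: "is_walk V (PE r t) xs" and h: "hd xs = u" "last xs = v" and l: "length xs = Suc n"
  shows "D u v \<le> n"
proof -
  have u: "u = xs!0" using h w by (simp add: hd_conv_nth is_walk_def)
  have v: "v = xs!n" using h w l by (simp add: last_conv_nth is_walk_def)
  have f: "(fst u - fst v) + (fst v - fst u) \<le> n \<and> even (n + fst u + fst v)"
    using walk_fst[OF w, of n] l u v by simp
  show ?thesis
  proof (cases "n = 0")
    case True then show ?thesis using u v by (simp add: D_def)
  next
    case False
    show ?thesis
    proof (cases "n = 1")
      case True
      then have "PE r t u v" using w l u v unfolding is_walk_def by auto
      then show ?thesis using True by (auto simp: PE_def D_def)
    next
      case False
      have "even (n + fst u + fst v)" "(fst u - fst v) + (fst v - fst u) \<le> n" using f by auto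
      then show ?thesis unfolding D_def using \<open>n \<noteq> 0\<close> False by presburger
    qed
  qed
qed

lemma color3: "(t::nat) \<ge> 3 \<Longrightarrow> \<exists>c<t. c \<noteq> a \<and> c \<noteq> b"
  by (metis One_nat_def Suc_1 Suc_lessD eval_nat_numeral(3) le_eq_less_or_eq n_not_Suc_n nat_neq_iff order_less_le_trans)

lemma mono_walk: assumes "t \<ge> 3" shows
  "1 \<le> n \<Longrightarrow> (n \<ge> 2 \<or> a \<noteq> b) \<Longrightarrow> i + n < r \<Longrightarrow> a < t \<Longrightarrow> b < t \<Longrightarrow>
   \<exists>xs. is_walk (PV r t) (PE r t) xs \<and> hd xs = (i,a) \<and> last xs = (i+n,b) \<and> length xs = Suc n"
proof (induction n arbitrary: i a)
  case 0 then show ?case by simp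
next
  case (Suc n)
  show ?case
  proof (cases "n = 0")
    case True
    then show ?thesis using Suc.prems
      by (intro exI[of _ "[(i,a),(i+1,b)]"]) (auto simp: is_walk_Cons PV_def PE_def)
  next
    case False
    obtain c where c: "c < t" "c \<noteq> a" "c \<noteq> b" using color3[OF assms] by blast
    obtain ys where ys: "is_walk (PV r t) (PE r t) ys" "hd ys = (Suc i, c)" "last ys = (Suc i + n, b)" "length ys = Suc n"
      using Suc.IH[where i="Suc i" and a=c] Suc.prems False c by auto
    have e: "PE r t (i,a) (hd ys)" using ys Suc.prems c by (simp add: PE_def)
    have "(i,a) \<in> PV r t" using Suc.prems by (simp add: PV_def)
    then show ?thesis using ys e
      by (intro exI[of _ "(i,a) # ys"]) (auto simp: is_walk_Cons)
  qed
qed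




lemma PE_sym: "PE r t x y \<Longrightarrow> PE r t y x" by (auto simp: PE_def)

lemma walk_exists: assumes r: "r \<ge> 2" and t: "t \<ge> 3" and u: "u \<in> PV r t" and v: "v \<in> PV r t"
  shows "\<exists>xs. is_walk (PV r t) (PE r t) xs \<and> hd xs = u \<and> last xs = v \<and> length xs = Suc (D u v)"
proof -
  obtain i a j b where uv: "u = (i,a)" "v = (j,b)" by fastforce
  have ia: "i < r" "a < t" "j < r" "b < t" using u v uv by (auto simp: PV_def)
  consider "i = j \<and> a = b" | "i = j \<and> a \<noteq> b" | "(j = Suc i \<or> i = Suc j) \<and> a = b"
    | "i < j \<and> (j \<noteq> Suc i \<or> a \<noteq> b)" | "j < i \<and> (i \<noteq> Suc j \<or> a \<noteq> b)" by linarith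
  then show ?thesis
  proof cases
    case 1 then show ?thesis using u uv by (intro exI[of _ "[u]"]) (auto simp: is_walk_def D_def)
  next
    case 2
    obtain c where c: "c < t" "c \<noteq> a" "c \<noteq> b" using color3[OF t] by blast
    define i' where "i' = (if Suc i < r then Suc i else i - 1)"
    have i': "i' < r" "i' = Suc i \<or> i = Suc i'" using ia r unfolding i'_def by auto
    have e1: "PE r t (i,a) (i',c)" "PE r t (i',c) (i,b)" using i' ia c 2 by (auto simp: PE_def)
    have "is_walk (PV r t) (PE r t) [(i,a),(i',c),(i,b)]"
      using i' ia c e1 by (simp add: is_walk_Cons PV_def)
    then show ?thesis using 2 uv by (intro exI[of _ "[(i,a),(i',c),(i,b)]"]) (auto simp: D_def)
  next
    case 3
    obtain c where c: "c < t" "c \<noteq> a" using color3[OF t] by blast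
    obtain d where d: "d < t" "d \<noteq> a" "d \<noteq> c" using color3[OF t] by blast
    have e1: "PE r t (i,a) (j,c)" "PE r t (j,c) (i,d)" "PE r t (i,d) (j,a)" using ia c d 3 by (auto simp: PE_def)
    have "is_walk (PV r t) (PE r t) [(i,a),(j,c),(i,d),(j,a)]"
      using ia c d e1 by (simp add: is_walk_Cons PV_def)
    then show ?thesis using 3 uv by (intro exI[of _ "[(i,a),(j,c),(i,d),(j,a)]"]) (auto simp: D_def)
  next
    case 4
    obtain xs where xs: "is_walk (PV r t) (PE r t) xs" "hd xs = (i,a)" "last xs = (i+(j-i),b)" "length xs = Suc (j-i)"
      using mono_walk[OF t, of "j-i" a b i r] 4 ia by force
    then show ?thesis using 4 uv by (intro exI[of _ xs]) (auto simp: D_def)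
  next
    case 5
    obtain xs where xs: "is_walk (PV r t) (PE r t) xs" "hd xs = (j,b)" "last xs = (j+(i-j),a)" "length xs = Suc (i-j)"
      using mono_walk[OF t, of "i-j" b a j r] 5 ia by force
    have ne: "xs \<noteq> []" using xs by (auto simp: is_walk_def)
    have "is_walk (PV r t) (PE r t) (rev xs)" using is_walk_rev[OF xs(1)] PE_sym by blast
    then show ?thesis using 5 uv xs ne by (intro exI[of _ "rev xs"]) (auto simp: D_def hd_rev last_rev)
  qed
qed

lemma gdist_D: assumes "r \<ge> 2" "t \<ge> 3" "u \<in> PV r t" "v \<in> PV r t"
  shows "gdist (PV r t) (PE r t) u v = D u v"
proof -
  obtain xs where xs: "is_walk (PV r t) (PE r t) xs" "hd xs = u" "last xs = v" "length xs = Suc (D u v)"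
    using walk_exists[OF assms] by blast
  have "gdist (PV r t) (PE r t) u v \<le> D u v" using gdist_le[OF xs] .
  moreover obtain ys where "is_walk (PV r t) (PE r t) ys" "hd ys = u" "last ys = v"
      "length ys = Suc (gdist (PV r t) (PE r t) u v)" using gdist_ex[OF xs(1-3)] by blast
  then have "D u v \<le> gdist (PV r t) (PE r t) u v" using walk_lower by blast
  ultimately show ?thesis by simp
qed

lemma interval_D1: assumes "r \<ge> 2" "t \<ge> 3" "u \<in> PV r t" "v \<in> PV r t"
  and "w \<in> interval (PV r t) (PE r t) u v"
  shows "D u w + D w v \<le> D u v"
proof -
  obtain xs where xs: "is_walk (PV r t) (PE r t) xs" "hd xs = u" "last xs = v"
    "length xs = Suc (D u v)" "w \<in> set xs"
    using assms(5) gdist_D[OF assms(1-4)] unfolding interval_def by auto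
  obtain p where p: "p < length xs" "xs ! p = w" using xs(5) by (meson in_set_conv_nth)
  have ne: "xs \<noteq> []" using xs by (auto simp: is_walk_def)
  have w1: "is_walk (PV r t) (PE r t) (take (Suc p) xs)" using is_walk_take[OF xs(1) p(1)] .
  have "hd (take (Suc p) xs) = u" using xs ne by (simp add: hd_take)
  moreover have "last (take (Suc p) xs) = w" using p by (subst last_conv_nth) (auto simp: min_def intro: arg_cong[where f="(!) xs"]) 
  ultimately have a: "D u w \<le> p" using walk_lower[OF w1] p by simp
  have w2: "is_walk (PV r t) (PE r t) (drop p xs)" using is_walk_drop[OF xs(1) p(1)] .
  have "hd (drop p xs) = w" using p by (simp add: hd_drop_conv_nth)
  moreover have "last (drop p xs) = v" using xs p by simp
  ultimately have b: "D w v \<le> D u v - p" using walk_lower[OF w2] p xs(4) by simp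
  show ?thesis using a b p xs(4) by linarith
qed

lemma interval_D2: assumes "r \<ge> 2" "t \<ge> 3" "u \<in> PV r t" "v \<in> PV r t" "w \<in> PV r t"
  and "D u w + D w v = D u v"
  shows "w \<in> interval (PV r t) (PE r t) u v"
proof -
  obtain xs where xs: "is_walk (PV r t) (PE r t) xs" "hd xs = u" "last xs = w" "length xs = Suc (D u w)"
    using walk_exists[OF assms(1,2,3,5)] by blast
  obtain ys where ys: "is_walk (PV r t) (PE r t) ys" "hd ys = w" "last ys = v" "length ys = Suc (D w v)"
    using walk_exists[OF assms(1,2,5,4)] by blast
  have ne: "xs \<noteq> []" "ys \<noteq> []" using xs ys by (auto simp: is_walk_def)
  have w: "is_walk (PV r t) (PE r t) (xs @ tl ys)" using is_walk_append[OF xs(1) ys(1)] xs ys by simp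
  have "hd (xs @ tl ys) = u" using ne xs by simp
  moreover have "last (xs @ tl ys) = v"
  proof (cases "tl ys = []")
    case True
    then have "ys = [hd ys]" using ne(2) by (cases ys) auto
    then have "last ys = hd ys" by (metis last_ConsL)
    then show ?thesis using True xs ys by simp
  next
    case False
    then have "last (tl ys) = last ys" using ne(2) by (cases ys) auto
    then show ?thesis using False ys by simp
  qed
  moreover have "length (xs @ tl ys) = Suc (D u v)" using xs ys assms(6) by simp
  moreover have "w \<in> set (xs @ tl ys)" using xs ne by auto
  ultimately show ?thesis using w unfolding interval_def gdist_D[OF assms(1-4)] by (intro CollectI exI[of _ "xs @ tl ys"]) simp
qed




lemma cover_count:
  assumes c: "\<forall>i. Suc i < R \<longrightarrow> i \<in> A \<or> Suc i \<in> A"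
  shows "r \<le> R \<Longrightarrow> r div 2 \<le> card (A \<inter> {..<r})"
proof (induction r rule: less_induct)
  case (less r)
  show ?case
  proof (cases "r < 2")
    case True then show ?thesis by simp
  next
    case False
    then obtain s where s: "r = Suc (Suc s)" by (metis add_2_eq_Suc le_add_diff_inverse not_less)
    have ih: "s div 2 \<le> card (A \<inter> {..<s})" using less s by simp
    have "s \<in> A \<or> Suc s \<in> A" using c less s by simp
    then have "1 \<le> card (A \<inter> {s, Suc s})" by (auto simp: card_gt_0_iff Suc_le_eq)
    moreover have "A \<inter> {..<r} = (A \<inter> {..<s}) \<union> (A \<inter> {s, Suc s})" using s by auto
    moreover have "card ((A \<inter> {..<s}) \<union> (A \<inter> {s, Suc s})) = card (A \<inter> {..<s}) + card (A \<inter> {s, Suc s})"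
      by (rule card_Un_disjoint) auto
    ultimately show ?thesis using ih s by simp
  qed
qed

lemma cover_count0:
  assumes c: "\<forall>i. Suc i < R \<longrightarrow> i \<in> A \<or> Suc i \<in> A" and z: "0 \<in> A"
  shows "r \<le> R \<Longrightarrow> (r + 1) div 2 \<le> card (A \<inter> {..<r})"
proof (induction r rule: less_induct)
  case (less r)
  show ?case
  proof (cases "r < 2")
    case True
    show ?thesis
    proof (cases "r = 0")
      case True then show ?thesis by simp
    next
      case False
      then have "r = 1" using \<open>r < 2\<close> by simp
      then have "A \<inter> {..<r} = {0}" using z by auto
      then show ?thesis using \<open>r = 1\<close> by simp
    qed
  next
    case False
    then obtain s where s: "r = Suc (Suc s)" by (metis add_2_eq_Suc le_add_diff_inverse not_less)
    have ih: "(s + 1) div 2 \<le> card (A \<inter> {..<s})" using less s by simp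
    have "s \<in> A \<or> Suc s \<in> A" using c less s by simp
    then have "1 \<le> card (A \<inter> {s, Suc s})" by (auto simp: card_gt_0_iff Suc_le_eq)
    moreover have "A \<inter> {..<r} = (A \<inter> {..<s}) \<union> (A \<inter> {s, Suc s})" using s by auto
    moreover have "card ((A \<inter> {..<s}) \<union> (A \<inter> {s, Suc s})) = card (A \<inter> {..<s}) + card (A \<inter> {s, Suc s})"
      by (rule card_Un_disjoint) auto
    ultimately show ?thesis using ih s by simp
  qed
qed

lemma cover_countR:
  assumes c: "\<forall>i. Suc i < R \<longrightarrow> i \<in> A \<or> Suc i \<in> A" and z: "R - 1 \<in> A" and sub: "A \<subseteq> {..<R}" and R: "R \<ge> 1"
  shows "(R + 1) div 2 \<le> card A"
proof -
  define f where "f = (\<lambda>i::nat. R - 1 - i)"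
  define B where "B = f ` A"
  have inj: "inj_on f A"
  proof (rule inj_onI)
    fix x y assume x: "x \<in> A" and y: "y \<in> A" and e: "f x = f y"
    have "x < R" "y < R" using x y sub by auto
    then show "x = y" using e unfolding f_def by linarith
  qed
  have cB: "\<forall>i. Suc i < R \<longrightarrow> i \<in> B \<or> Suc i \<in> B"
  proof (intro allI impI)
    fix i assume i: "Suc i < R"
    have "R - 2 - i \<in> A \<or> Suc (R - 2 - i) \<in> A" using c i by simp
    moreover have "f (R - 2 - i) = Suc i" "f (Suc (R - 2 - i)) = i" using i unfolding f_def by auto
    ultimately show "i \<in> B \<or> Suc i \<in> B" unfolding B_def by (metis image_eqI)
  qed
  have "0 \<in> B" using z unfolding B_def f_def by force
  then have "(R + 1) div 2 \<le> card (B \<inter> {..<R})" using cover_count0[OF cB] by blast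
  also have "B \<inter> {..<R} = B" using sub R unfolding B_def f_def by auto
  also have "card B = card A" unfolding B_def using card_image[OF inj] .
  finally show ?thesis .
qed




lemma D_ge_di: "(fst u - fst w) + (fst w - fst u) \<le> D u w"
  unfolding D_def by (simp split: if_split)

lemma D_ge1: "u \<noteq> w \<Longrightarrow> 1 \<le> D u w"
  unfolding D_def by (cases u; cases w) (simp split: if_split, arith)

lemma D_big: "4 \<le> D u w \<Longrightarrow> D u w = (fst u - fst w) + (fst w - fst u)"
  unfolding D_def by (simp split: if_split_asm)

lemma D_di2: "2 \<le> (fst u - fst w) + (fst w - fst u) \<Longrightarrow> D u w = (fst u - fst w) + (fst w - fst u)"
  unfolding D_def by (simp split: if_split, arith)

lemma mmd1: assumes "D (i,a) (Suc i,a) + D (Suc i,a) w \<le> D (i,a) w \<or> D (Suc i,a) (i,a) + D (i,a) w \<le> D (Suc i,a) w"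
  shows "w = (i,a) \<or> w = (Suc i,a)"
proof (rule ccontr)
  assume ne: "\<not> (w = (i,a) \<or> w = (Suc i,a))"
  obtain k c where w: "w = (k,c)" by fastforce
  have d: "D (i,a) (Suc i,a) = 3" "D (Suc i,a) (i,a) = 3" by (simp_all add: D_def)
  have g1: "1 \<le> D (i,a) w" "1 \<le> D (Suc i,a) w" using ne D_ge1 by metis+
  have g2: "(i - k) + (k - i) \<le> D (i,a) w" "(Suc i - k) + (k - Suc i) \<le> D (Suc i,a) w"
    using D_ge_di[of "(i,a)" w] D_ge_di[of "(Suc i,a)" w] w by simp_all
  show False
  proof (cases "D (i,a) (Suc i,a) + D (Suc i,a) w \<le> D (i,a) w")
    case True
    then have "4 \<le> D (i,a) w" using d g1 by linarith
    then have "D (i,a) w = (i - k) + (k - i)" using D_big w by force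
    then show False using True d g2 by arith
  next
    case False
    then have h: "D (Suc i,a) (i,a) + D (i,a) w \<le> D (Suc i,a) w" using assms by blast
    then have "4 \<le> D (Suc i,a) w" using d g1 by linarith
    then have "D (Suc i,a) w = (Suc i - k) + (k - Suc i)" using D_big w by force
    then show False using h d g2 by arith
  qed
qed

lemma mmd2: assumes r: "r \<ge> 4" and k: "fst w < r"
  and h: "D (0,a) (r-1,b) + D (r-1,b) w \<le> D (0,a) w \<or> D (r-1,b) (0,a) + D (0,a) w \<le> D (r-1,b) w"
  shows "w = (0,a) \<or> w = (r-1,b)"
proof (rule ccontr)
  assume ne: "\<not> (w = (0,a) \<or> w = (r-1,b))"
  obtain k c where w: "w = (k,c)" by fastforce
  have d: "D (0,a) (r-1,b) = r - 1" "D (r-1,b) (0,a) = r - 1"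
    using D_di2[of "(0,a)" "(r-1,b)"] D_di2[of "(r-1,b)" "(0,a)"] r by simp_all
  have g1: "1 \<le> D (0,a) w" "1 \<le> D (r-1,b) w" using ne D_ge1 by metis+
  show False
  proof (cases "D (0,a) (r-1,b) + D (r-1,b) w \<le> D (0,a) w")
    case True
    then have "4 \<le> D (0,a) w" using d g1 r by linarith
    then have "D (0,a) w = k" using D_big w by force
    then show False using True d g1 k w by simp
  next
    case False
    then have h: "D (r-1,b) (0,a) + D (0,a) w \<le> D (r-1,b) w" using h by blast
    then have "4 \<le> D (r-1,b) w" using d g1 r by linarith
    then have "D (r-1,b) w = (r - 1 - k) + (k - (r - 1))" using D_big w by force
    then show False using h d g1 k w by simp
  qed
qed

lemma mmd3: assumes k: "fst w < 3"
  and h: "D (0,a) (2,a) + D (2,a) w \<le> D (0,a) w \<or> D (2,a) (0,a) + D (0,a) w \<le> D (2,a) w"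
  shows "w = (0,a) \<or> w = (2,a)"
proof (rule ccontr)
  assume ne: "\<not> (w = (0,a) \<or> w = (2,a))"
  obtain k c where w: "w = (k,c)" by fastforce
  have "k = 0 \<or> k = 1 \<or> k = 2" using k w by auto
  then show False
  proof (elim disjE)
    assume "k = 0" then show False using h ne w by (cases "c = a") (simp_all add: D_def)
  next
    assume "k = 1" then show False using h ne w by (cases "c = a") (simp_all add: D_def)
  next
    assume "k = 2" then show False using h ne w by (cases "c = a") (simp_all add: D_def)
  qed
qed




definition S0 :: "nat \<Rightarrow> nat \<Rightarrow> (nat \<times> nat) set" where
  "S0 r t = {x. x \<in> PV r t \<and> even (fst x)}"

lemma res_of_D: assumes "r \<ge> 2" "t \<ge> 3" "u \<in> PV r t" "v \<in> PV r t" "w \<in> PV r t"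
  shows "D u v + D v w = D u w \<Longrightarrow> strongly_resolves (PV r t) (PE r t) w u v"
    and "D v u + D u w = D v w \<Longrightarrow> strongly_resolves (PV r t) (PE r t) w u v"
  using interval_D2[OF assms(1,2,3,5,4)] interval_D2[OF assms(1,2,4,5,3)]
  unfolding strongly_resolves_def by auto

lemma up_res: assumes r: "r \<ge> 2" and t: "t \<ge> 3" and uv: "(i,a) \<in> PV r t" "(j,b) \<in> PV r t"
  and o: "odd i" "odd j" and ij: "i \<le> j" and ne: "(i,a) \<noteq> (j,b)"
  shows "\<exists>w\<in>S0 r t. strongly_resolves (PV r t) (PE r t) w (i,a) (j,b)"
proof -
  have lt: "i < r" "j < r" "a < t" "b < t" using uv by (auto simp: PV_def)
  have i1: "i = Suc (i - 1)" using o by (cases i) auto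
  show ?thesis
  proof (cases "i = j")
    case True
    then have ab: "a \<noteq> b" using ne by simp
    define w where "w = (i - 1, a)"
    have wS: "w \<in> S0 r t" using lt o i1 unfolding w_def S0_def PV_def by auto
    have "D (i,a) (j,b) + D (j,b) w = D (i,a) w" unfolding w_def D_def using True ab i1
      by (simp del: Suc_pred)
    moreover have "w \<in> PV r t" using wS by (simp add: S0_def)
    ultimately show ?thesis using res_of_D(1)[OF r t uv, of w] wS by blast
  next
    case False
    then have ij2: "j \<ge> i + 2" using ij o by presburger
    show ?thesis
    proof (cases "Suc j < r")
      case True
      obtain c where c: "c < t" "c \<noteq> b" using color3[OF t] by blast
      define w where "w = (Suc j, c)"
      have wS: "w \<in> S0 r t" using True c o unfolding w_def S0_def PV_def by auto
      have "D (i,a) (j,b) + D (j,b) w = D (i,a) w" unfolding w_def D_def using ij2 c by auto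
      moreover have "w \<in> PV r t" using wS by (simp add: S0_def)
    ultimately show ?thesis using res_of_D(1)[OF r t uv, of w] wS by blast
    next
      case False
      obtain c where c: "c < t" "c \<noteq> a" using color3[OF t] by blast
      define w where "w = (i - 1, c)"
      have wS: "w \<in> S0 r t" using lt c o i1 unfolding w_def S0_def PV_def by auto
      have "D (j,b) (i,a) + D (i,a) w = D (j,b) w" unfolding w_def D_def using ij2 c i1 by auto
      moreover have "w \<in> PV r t" using wS by (simp add: S0_def)
    ultimately show ?thesis using res_of_D(2)[OF r t uv, of w] wS by blast
    qed
  qed
qed

lemma S0_res: assumes r: "r \<ge> 2" and t: "t \<ge> 3"
  shows "strong_resolving_set (PV r t) (PE r t) (S0 r t)"
  unfolding strong_resolving_set_def
proof (intro conjI ballI impI)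
  show "S0 r t \<subseteq> PV r t" unfolding S0_def by auto
  fix u v assume u: "u \<in> PV r t" and v: "v \<in> PV r t" and ne: "u \<noteq> v"
  obtain i a j b where uv: "u = (i,a)" "v = (j,b)" by fastforce
  show "\<exists>w\<in>S0 r t. strongly_resolves (PV r t) (PE r t) w u v"
  proof (cases "u \<in> S0 r t")
    case True
    have "D v u + D u u = D v u" by (simp add: D_def)
    then show ?thesis using True res_of_D(2)[OF r t u v u] by blast
  next
    case F1: False
    show ?thesis
    proof (cases "v \<in> S0 r t")
      case True
      have "D u v + D v v = D u v" by (simp add: D_def)
      then show ?thesis using True res_of_D(1)[OF r t u v v] by blast
    next
      case False
      have o: "odd i" "odd j" using F1 False u v uv unfolding S0_def by auto
      show ?thesis
      proof (cases "i \<le> j")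
        case True then show ?thesis using up_res[OF r t] u v uv o ne by blast
      next
        case False
        then obtain w where "w \<in> S0 r t" "strongly_resolves (PV r t) (PE r t) w v u"
          using up_res[OF r t, of j b i a] u v uv o ne by auto
        then show ?thesis unfolding strongly_resolves_def by blast
      qed
    qed
  qed
qed

lemma card_S0: "card (S0 r t) = t * ((r + 1) div 2)"
proof -
  have e: "{i. i < r \<and> even i} = (\<lambda>k. 2 * k) ` {..<(r + 1) div 2}"
  proof (rule set_eqI)
    fix i show "i \<in> {i. i < r \<and> even i} \<longleftrightarrow> i \<in> (\<lambda>k. 2 * k) ` {..<(r + 1) div 2}"
    proof
      assume "i \<in> {i. i < r \<and> even i}"
      then have "i = 2 * (i div 2)" "i div 2 < (r + 1) div 2" by auto
      then show "i \<in> (\<lambda>k. 2 * k) ` {..<(r + 1) div 2}" by blast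
    next
      assume "i \<in> (\<lambda>k. 2 * k) ` {..<(r + 1) div 2}"
      then show "i \<in> {i. i < r \<and> even i}" by auto
    qed
  qed
  have "card {i. i < r \<and> even i} = (r + 1) div 2" unfolding e
    by (subst card_image) (auto simp: inj_on_def)
  moreover have "S0 r t = {i. i < r \<and> even i} \<times> {..<t}" unfolding S0_def PV_def by auto
  ultimately show ?thesis by (simp add: card_cartesian_product)
qed



lemma res_D: assumes "r \<ge> 2" "t \<ge> 3" "u \<in> PV r t" "v \<in> PV r t" "w \<in> PV r t"
  and "strongly_resolves (PV r t) (PE r t) w u v"
  shows "D u v + D v w \<le> D u w \<or> D v u + D u w \<le> D v w"
  using assms(6) interval_D1[OF assms(1,2,3,5), of v] interval_D1[OF assms(1,2,4,5), of u]
  unfolding strongly_resolves_def by blast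

lemma lower: assumes r: "r \<ge> 2" and t: "t \<ge> 3" and S: "strong_resolving_set (PV r t) (PE r t) S"
  shows "t * ((r + 1) div 2) \<le> card S"
proof -
  have sub: "S \<subseteq> PV r t" using S by (simp add: strong_resolving_set_def)
  have hit: "u \<in> S \<or> v \<in> S" if u: "u \<in> PV r t" and v: "v \<in> PV r t" and ne: "u \<noteq> v"
    and m: "\<And>w. w \<in> PV r t \<Longrightarrow> D u v + D v w \<le> D u w \<or> D v u + D u w \<le> D v w \<Longrightarrow> w = u \<or> w = v" for u v
  proof -
    obtain w where "w \<in> S" "strongly_resolves (PV r t) (PE r t) w u v"
      using S u v ne unfolding strong_resolving_set_def by blast
    then show ?thesis using m res_D[OF r t u v] sub by blast
  qed
  define A where "A a = {i. (i,a) \<in> S}" for a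
  have Asub: "A a \<subseteq> {..<r}" for a using sub unfolding A_def PV_def by auto
  have cov: "\<forall>i. Suc i < r \<longrightarrow> i \<in> A a \<or> Suc i \<in> A a" if a: "a < t" for a
  proof (intro allI impI)
    fix i assume i: "Suc i < r"
    have "(i,a) \<in> S \<or> (Suc i,a) \<in> S"
      by (rule hit) (use i a mmd1 in \<open>auto simp: PV_def\<close>)
    then show "i \<in> A a \<or> Suc i \<in> A a" unfolding A_def by auto
  qed
  have ends: "(\<forall>a<t. 0 \<in> A a \<or> r - 1 \<in> A a) \<or> even r"
  proof (cases "r = 3")
    case True
    have "0 \<in> A a \<or> r - 1 \<in> A a" if a: "a < t" for a
    proof -
      have "(0,a) \<in> S \<or> (2,a) \<in> S"
        apply (rule hit)
        subgoal using True a by (simp add: PV_def)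
        subgoal using True a by (simp add: PV_def)
        subgoal by simp
        subgoal for w using True by (intro mmd3) (auto simp: PV_def)
        done
      then show ?thesis using True unfolding A_def by auto
    qed
    then show ?thesis by blast
  next
    case False
    show ?thesis
    proof (cases "r \<ge> 4")
      case r4: True
      show ?thesis
      proof (cases "\<forall>a<t. 0 \<in> A a")
        case True then show ?thesis by blast
      next
        case False
        then obtain a0 where a0: "a0 < t" "0 \<notin> A a0" by blast
        have "r - 1 \<in> A b" if b: "b < t" for b
        proof -
          have "(0,a0) \<in> S \<or> (r-1,b) \<in> S"
            apply (rule hit)
            subgoal using r4 a0 by (simp add: PV_def)
            subgoal using r4 b by (simp add: PV_def)
            subgoal using r4 by simp
            subgoal for w using r4 by (intro mmd2) (auto simp: PV_def)
            done
          then show ?thesis using a0 unfolding A_def by auto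
        qed
        then show ?thesis by blast
      qed
    next
      case False
      then have "r = 2" using r \<open>r \<noteq> 3\<close> by linarith
      then show ?thesis by simp
    qed
  qed
  have each: "(r + 1) div 2 \<le> card (A a)" if a: "a < t" for a
  proof -
    have eq: "A a \<inter> {..<r} = A a" using Asub by auto
    consider "even r" | "0 \<in> A a" | "r - 1 \<in> A a" using ends a by blast
    then show ?thesis
    proof cases
      case 1
      then have "(r + 1) div 2 = r div 2" by presburger
      then show ?thesis using cover_count[OF cov[OF a], of r] eq by simp
    next
      case 2 then show ?thesis using cover_count0[OF cov[OF a] 2, of r] eq by simp
    next
      case 3 then show ?thesis using cover_countR[OF cov[OF a] 3 Asub] r by simp
    qed
  qed
  have fin: "finite S" using sub finite_subset unfolding PV_def by blast
  have T: "prod.swap ` S = (SIGMA a:{..<t}. A a)" using sub unfolding A_def PV_def by force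
  have "card S = card (prod.swap ` S)" by (simp add: card_image)
  also have "\<dots> = (\<Sum>a<t. card (A a))" unfolding T
    by (rule card_SigmaI) (use Asub in \<open>auto intro: finite_subset[OF _ finite_lessThan]\<close>)
  also have "\<dots> \<ge> (\<Sum>a<t. (r + 1) div 2)" by (rule sum_mono) (use each in auto)
  finally show ?thesis by simp
qed

lemma ceil_half: "nat \<lceil>real r / 2\<rceil> = (r + 1) div 2"
proof -
  have "\<lceil>real r / 2\<rceil> = int ((r + 1) div 2)"
  proof (rule ceiling_unique)
    obtain m where "r = 2 * m \<or> r = 2 * m + 1" by (metis oddE evenE)
    then show "real_of_int (int ((r + 1) div 2)) - 1 < real r / 2"
      and "real r / 2 \<le> real_of_int (int ((r + 1) div 2))" by auto
  qed
  then show ?thesis by simp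
qed

theorem theorem37:
  fixes r t :: nat
  assumes "r \<ge> 2" and "t \<ge> 3"
  shows "strong_metric_dim
           (direct_prod_vertices (path_vertices r) (complete_vertices t))
           (direct_prod_adj (path_adj r) (complete_adj t))
         = t * nat \<lceil>real r / 2\<rceil>"
  unfolding PV_eq PE_eq ceil_half strong_metric_dim_def
proof (rule Least_equality)
  show "\<exists>S. strong_resolving_set (PV r t) (PE r t) S \<and> finite S \<and> card S = t * ((r + 1) div 2)"
    using S0_res[OF assms] card_S0[of r t] finite_subset[of "S0 r t" "PV r t"]
    by (intro exI[of _ "S0 r t"]) (auto simp: PV_def S0_def)
  fix k assume "\<exists>S. strong_resolving_set (PV r t) (PE r t) S \<and> finite S \<and> card S = k"
  then show "t * ((r + 1) div 2) \<le> k" using lower[OF assms] by blast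
qed


end
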